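(* Let $(K,w_K)$ be an $(n+1)$-dimensional simplicial complex with $w_K\equiv 1$ on a vertex set $V$, and let $(H,w_H)$ be an $(n+1)$-dimensional subcomplex with $w_H\equiv 1$ on the faces of $H$, such that their proper difference $(L,w_L)$ exists, i.e. $L=K$ as simplicial complexes, $w_L=w_K-w_H$ (so $w_L=0$ on faces of $H$ and $w_L=1$ on the other faces of $K$), and $\{F\in K: w_L(F)>0\}$ is a simplicial complex. Let $N=|S_n(K)|$ and let $\lambda_1\le\dots\le\lambda_N$ and $\theta_1\le\dots\le\theta_N$ be the eigenvalues of $\mathcal{L}^{up}_n(K,w_K)$ (the combinatorial up-Laplacian of $K$) and $\mathcal{L}^{up}_n(L,w_L)$, respectively. Put $D_{\mathcal{W}}=\dim C^{n+1}(H,\mathbb{R})-\dim H^{n+1}(H,\mathbb{R})$ and $D_H=\dim C^n(H,\mathbb{R})$, and use the conventions $\lambda_j=0$ for $1-D_{\mathcal{W}}\le j\le 0$ and $\lambda_j=|V|$ for $N+1\le j\le N+D_H$. Then for all $k=1,\dots,N$, $$\lambda_{k-D_{\mathcal{W}}}\le\theta_k\le\lambda_{k+D_H}.$$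
   Context: $S_j(K)$ is the set of $j$-faces of $K$; $C^j(K,\mathbb{R})$ is the space of real cochains on oriented $j$-faces (antisymmetric under orientation reversal), with coboundary $(\delta_j f)([v_0,\dots,v_{j+1}])=\sum_i(-1)^i f([v_0,\dots,\hat v_i,\dots,v_{j+1}])$. For a weight function $w\ge 0$ on faces, $C^j$ carries $(f,g)=\sum_{F\in S_j}w(F)f([F])g([F])$, and the formal adjoint is $(\delta_j^*\bar f)([F])=\sum_{\bar F\supset F,\ \bar F\in S_{j+1}}\frac{w(\bar F)}{w(F)}\mathrm{sgn}([F],\partial[\bar F])\bar f([\bar F])$ if $w(F)\neq0$ and $0$ otherwise, where $\mathrm{sgn}([v_0,\dots,\hat v_i,\dots,v_{j+1}],\partial[v_0,\dots,v_{j+1}])=(-1)^i$. The up-Laplacian is $\mathcal{L}^{up}_n(K,w)=\delta_n^*\delta_n$ on $C^n(K,\mathbb{R})$; a weight function with zeros gives a degenerate weighted complex. $H^{n+1}(H,\mathbb{R})$ is simplicial cohomology with real coefficients. *)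

theory Defs
  imports "Jordan_Normal_Form.Char_Poly" "Jordan_Normal_Form.Matrix_Kernel" "Jordan_Normal_Form.DL_Rank"
begin

definition is_complex :: "'a set set \<Rightarrow> bool" where
  "is_complex K \<longleftrightarrow> (\<forall>F\<in>K. F \<noteq> {} \<and> finite F) \<and>
                     (\<forall>F\<in>K. \<forall>G. G \<subseteq> F \<and> G \<noteq> {} \<longrightarrow> G \<in> K)"

definition complex_on :: "'a set \<Rightarrow> 'a set set \<Rightarrow> bool" where
  "complex_on V K \<longleftrightarrow> finite V \<and> is_complex K \<and> \<Union>K = V"

definition complex_dim :: "'a set set \<Rightarrow> nat \<Rightarrow> bool" where
  "complex_dim K d \<longleftrightarrow> (\<exists>F\<in>K. card F = d + 1) \<and> (\<forall>F\<in>K. card F \<le> d + 1)"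

definition faces :: "nat \<Rightarrow> 'a set set \<Rightarrow> 'a set set" where
  "faces j K = {F \<in> K. card F = j + 1}"

(* Oriented faces are represented by the increasing orientation w.r.t. the
   linear order on vertices; a cochain is determined by its values there.
   sgn([F], \<partial>[Fb]) = (-1)^i where the removed vertex is the i-th (from 0)
   vertex of Fb in increasing order. *)
definition sgn_face :: "'a::linorder set \<Rightarrow> 'a set \<Rightarrow> real" where
  "sgn_face F Fb = (-1) ^ card {v \<in> Fb. v < the_elem (Fb - F)}"

definition cob :: "'a::linorder set set \<Rightarrow> nat \<Rightarrow> ('a set \<Rightarrow> real) \<Rightarrow> 'a set \<Rightarrow> real" where
  "cob K j f Fb = (\<Sum>G\<in>{G \<in> faces j K. G \<subseteq> Fb}. sgn_face G Fb * f G)"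

(* formal adjoint \<delta>_j^* : C^(j+1) \<rightarrow> C^j w.r.t. the weight w *)
definition cob_adj :: "'a::linorder set set \<Rightarrow> ('a set \<Rightarrow> real) \<Rightarrow> nat \<Rightarrow> ('a set \<Rightarrow> real) \<Rightarrow> 'a set \<Rightarrow> real" where
  "cob_adj K w j g F =
     (if w F \<noteq> 0 then
        (\<Sum>Fb\<in>{Fb \<in> faces (j+1) K. F \<subseteq> Fb}. (w Fb / w F) * sgn_face F Fb * g Fb)
      else 0)"

definition up_lap :: "'a::linorder set set \<Rightarrow> ('a set \<Rightarrow> real) \<Rightarrow> nat \<Rightarrow> ('a set \<Rightarrow> real) \<Rightarrow> 'a set \<Rightarrow> real" where
  "up_lap K w n f = cob_adj K w n (cob K n f)"

(* a fixed enumeration of the j-faces (eigenvalues do not depend on it) *)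
definition face_list :: "nat \<Rightarrow> 'a set set \<Rightarrow> 'a set list" where
  "face_list j K = (SOME xs. distinct xs \<and> set xs = faces j K)"

definition ind_face :: "'a set \<Rightarrow> 'a set \<Rightarrow> real" where
  "ind_face G F = (if F = G then 1 else 0)"

definition up_lap_mat :: "'a::linorder set set \<Rightarrow> ('a set \<Rightarrow> real) \<Rightarrow> nat \<Rightarrow> real mat" where
  "up_lap_mat K w n =
     (let fl = face_list n K; N = length fl in
      mat N N (\<lambda>(i,k). up_lap K w n (ind_face (fl ! k)) (fl ! i)))"

definition cob_mat :: "'a::linorder set set \<Rightarrow> nat \<Rightarrow> real mat" where
  "cob_mat K j =
     (let fl = face_list j K; gl = face_list (j+1) K in
      mat (length gl) (length fl) (\<lambda>(i,k). cob K j (ind_face (fl ! k)) (gl ! i)))"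

definition cohom_dim_succ :: "'a::linorder set set \<Rightarrow> nat \<Rightarrow> nat" where
  "cohom_dim_succ K j =
     kernel_dim (cob_mat K (j+1)) - vec_space.rank (dim_row (cob_mat K j)) (cob_mat K j)"

end

theory Submission
  imports Defs "HOL-Computational_Algebra.Field_as_Ring" "HOL-Computational_Algebra.Polynomial_Factorial"
    "Jordan_Normal_Form.Jordan_Normal_Form_Existence" "Jordan_Normal_Form.Jordan_Normal_Form_Uniqueness"
begin

lemma count_filter_le:
  assumes "finite A"
  shows "size (filter_mset P (image_mset f (mset_set A))) = card {x\<in>A. P (f x)}"
proof -
  have "filter_mset P (image_mset f (mset_set A)) = image_mset f (filter_mset (P \<circ> f) (mset_set A))"
    by (simp add: image_mset_filter_mset_swap[symmetric] comp_def)
  also have "filter_mset (P \<circ> f) (mset_set A) = mset_set {x\<in>A. P (f x)}"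
    using assms by (simp add: filter_mset_mset_set)
  finally show ?thesis using assms by simp
qed

lemma filter_replicate_mset: "filter_mset P (replicate_mset n x) = (if P x then replicate_mset n x else {#})"
  by (induction n) auto

lemma sorted_card_le:
  fixes lam :: "nat \<Rightarrow> real"
  assumes mono: "\<forall>i j. 1 \<le> i \<longrightarrow> i \<le> j \<longrightarrow> j \<le> N \<longrightarrow> lam i \<le> lam j"
    and j: "1 \<le> j" "j \<le> N" and c: "card {k\<in>{1..N}. lam k \<le> t} \<ge> j"
  shows "lam j \<le> t"
proof (rule ccontr)
  assume "\<not> lam j \<le> t"
  hence "{k\<in>{1..N}. lam k \<le> t} \<subseteq> {1..<j}"
    using mono j by (auto simp: not_le) (metis less_le_trans not_le)
  hence "card {k\<in>{1..N}. lam k \<le> t} \<le> card {1..<j}" by (intro card_mono) auto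
  with c j show False by simp
qed

lemma sorted_card_ge:
  fixes lam :: "nat \<Rightarrow> real"
  assumes mono: "\<forall>i j. 1 \<le> i \<longrightarrow> i \<le> j \<longrightarrow> j \<le> N \<longrightarrow> lam i \<le> lam j"
    and j: "1 \<le> j" "j \<le> N"
  shows "card {k\<in>{1..N}. lam k \<le> lam j} \<ge> j"
proof -
  have "{1..j} \<subseteq> {k\<in>{1..N}. lam k \<le> lam j}" using mono j by auto
  hence "card {1..j} \<le> card {k\<in>{1..N}. lam k \<le> lam j}" by (intro card_mono) auto
  thus ?thesis by simp
qed

lemma size_filter_le_pos:
  fixes R :: "real multiset"
  assumes "0 \<le> t"
  shows "count R 0 \<le> size (filter_mset (\<lambda>x. x \<le> t) R)"
proof -
  have "count R 0 = count (filter_mset (\<lambda>x. x \<le> t) R) 0" using assms by simp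
  also have "\<dots> \<le> size (filter_mset (\<lambda>x. x \<le> t) R)" by (rule count_le_size)
  finally show ?thesis .
qed

lemma interlace_abstract:
  fixes lam theta :: "nat \<Rightarrow> real" and RH RM :: "real multiset"
  assumes lam: "\<forall>i j. 1 \<le> i \<longrightarrow> i \<le> j \<longrightarrow> j \<le> N \<longrightarrow> lam i \<le> lam j"
    and theta: "\<forall>i j. 1 \<le> i \<longrightarrow> i \<le> j \<longrightarrow> j \<le> N \<longrightarrow> theta i \<le> theta j"
    and HL: "image_mset lam (mset_set {1..N}) = RH + RM"
    and HT: "image_mset theta (mset_set {1..N}) = replicate_mset DH 0 + RM"
    and sizeH: "size RH = DH"
    and zeroH: "count RH 0 \<ge> DH - DW"
    and bnd: "\<forall>x\<in>#RH + RM. 0 \<le> x \<and> x \<le> Vc"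
    and k: "k \<in> {1..N}"
  shows "(if int k - int DW \<le> 0 then 0 else if int k - int DW > int N then Vc else lam (nat (int k - int DW))) \<le> theta k
       \<and> theta k \<le> (if int k + int DH \<le> 0 then 0 else if int k + int DH > int N then Vc else lam (nat (int k + int DH)))"
proof -
  define cL where "cL t = card {i\<in>{1..N}. lam i \<le> t}" for t
  define cT where "cT t = card {i\<in>{1..N}. theta i \<le> t}" for t
  define fM where "fM t = size (filter_mset (\<lambda>x. x \<le> t) RM)" for t
  define fH where "fH t = size (filter_mset (\<lambda>x. x \<le> t) RH)" for t
  have cLe: "cL t = fH t + fM t" for t
    using count_filter_le[of "{1..N}" "\<lambda>x. x \<le> t" lam] HL unfolding cL_def fH_def fM_def by simp
  have cTe: "cT t = (if 0 \<le> t then DH else 0) + fM t" for t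
    using count_filter_le[of "{1..N}" "\<lambda>x. x \<le> t" theta] HT unfolding cT_def fM_def
    by (simp add: filter_replicate_mset split: if_splits)
  have fHle: "fH t \<le> DH" for t unfolding fH_def using sizeH
    by (metis size_filter_mset_lesseq)
  have thmem: "theta k \<in># replicate_mset DH 0 + RM" using k HT[symmetric]
    by (metis finite_atLeastAtMost finite_set_mset_mset_set image_eqI set_image_mset)
  have thbnd: "0 \<le> theta k \<and> theta k \<le> Vc"
  proof (cases "theta k \<in># RM")
    case True thus ?thesis using bnd by auto
  next
    case False
    hence "theta k = 0" using thmem by (auto split: if_splits)
    moreover have "lam k \<in># RH + RM" using k HL[symmetric]
      by (metis finite_atLeastAtMost finite_set_mset_mset_set image_eqI set_image_mset)
    hence "0 \<le> Vc" using bnd by (metis order_trans)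
    ultimately show ?thesis by simp
  qed
  have kN: "1 \<le> k" "k \<le> N" using k by auto
  have low: "(if int k - int DW \<le> 0 then 0 else if int k - int DW > int N then Vc else lam (nat (int k - int DW))) \<le> theta k"
  proof (cases "int k - int DW \<le> 0")
    case True thus ?thesis using thbnd by simp
  next
    case False
    define j where "j = k - DW"
    have j: "1 \<le> j" "j \<le> N" "nat (int k - int DW) = j" using False kN unfolding j_def by auto
    have ck: "cT (theta k) \<ge> k" using sorted_card_ge[OF theta kN] unfolding cT_def .
    have "cL (theta k) \<ge> j"
    proof (cases "0 \<le> theta k")
      case True
      have "count RH 0 \<le> fH (theta k)" unfolding fH_def by (rule size_filter_le_pos[OF True])
      thus ?thesis using ck cLe cTe True zeroH unfolding j_def by simp
    next
      case False thus ?thesis using ck cLe cTe unfolding j_def by simp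
    qed
    hence "lam j \<le> theta k" using sorted_card_le[OF lam j(1,2)] unfolding cL_def by blast
    thus ?thesis using False j kN by auto
  qed
  have up: "theta k \<le> (if int k + int DH \<le> 0 then 0 else if int k + int DH > int N then Vc else lam (nat (int k + int DH)))"
  proof (cases "int k + int DH > int N")
    case True thus ?thesis using thbnd kN by simp
  next
    case False
    define s where "s = lam (k + DH)"
    have j: "1 \<le> k + DH" "k + DH \<le> N" using False kN by auto
    have "cL s \<ge> k + DH" using sorted_card_ge[OF lam j] unfolding cL_def s_def .
    hence "fM s \<ge> k" using cLe fHle[of s] by (metis add_le_cancel_left le_trans nat_add_left_cancel_le add.commute)
    hence "cT s \<ge> k" using cTe[of s] by simp
    hence "theta k \<le> s" using sorted_card_le[OF theta kN] unfolding cT_def by blast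
    moreover have "nat (int k + int DH) = k + DH" by simp
    ultimately show ?thesis using False kN unfolding s_def by simp
  qed
  show ?thesis using low up by blast
qed

definition Lm :: "'b list \<Rightarrow> ('b \<Rightarrow> 'b \<Rightarrow> 'a::comm_ring_1) \<Rightarrow> 'a mat" where
  "Lm xs f = mat (length xs) (length xs) (\<lambda>(i,k). f (xs!i) (xs!k))"

lemma Lm_carrier[simp]: "Lm xs f \<in> carrier_mat (length xs) (length xs)"
  unfolding Lm_def by simp

lemma Lm_index[simp]: "i < length xs \<Longrightarrow> k < length xs \<Longrightarrow> Lm xs f $$ (i,k) = f (xs!i) (xs!k)"
  "dim_row (Lm xs f) = length xs" "dim_col (Lm xs f) = length xs"
  unfolding Lm_def by auto

lemma sum_sel:
  fixes g :: "nat \<Rightarrow> 'a::comm_monoid_add"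
  assumes "distinct ys" "j0 < length ys" "x = ys!j0"
  shows "(\<Sum>j<length ys. (if x = ys!j then g j else 0)) = g j0"
proof -
  have "(\<Sum>j<length ys. (if x = ys!j then g j else 0)) = (\<Sum>j<length ys. (if j = j0 then g j else 0))"
    by (rule sum.cong, insert assms, auto simp: nth_eq_iff_index_eq)
  also have "\<dots> = g j0" using assms(2) by (simp add: sum.delta)
  finally show ?thesis .
qed

lemma Lm_perm_similar:
  fixes f :: "'b \<Rightarrow> 'b \<Rightarrow> 'a::comm_ring_1"
  assumes dx: "distinct xs" and dy: "distinct ys" and st: "set xs = set ys"
  shows "similar_mat (Lm xs f) (Lm ys f)"
proof -
  define n where "n = length xs"
  have len: "length ys = n" unfolding n_def using dx dy st by (metis distinct_card)
  define P where "P = mat n n (\<lambda>(i,j). if xs!i = ys!j then 1 else (0::'a))"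
  define Q where "Q = mat n n (\<lambda>(i,j). if ys!i = xs!j then 1 else (0::'a))"
  have ix: "\<exists>j<n. xs!i = ys!j" if "i < n" for i
    using that st len unfolding n_def by (metis in_set_conv_nth nth_mem)
  have iy: "\<exists>j<n. ys!i = xs!j" if "i < n" for i
    using that st len unfolding n_def by (metis in_set_conv_nth nth_mem)
  have PQ: "P * Q = 1\<^sub>m n"
  proof (rule eq_matI)
    fix i k assume i: "i < dim_row (1\<^sub>m n)" and k: "k < dim_col (1\<^sub>m n)"
    obtain j0 where j0: "j0 < n" "xs!i = ys!j0" using ix i by auto
    have "(P * Q) $$ (i,k) = (\<Sum>j<n. (if xs!i = ys!j then (if ys!j = xs!k then 1 else 0) else 0))"
      using i k unfolding P_def Q_def by (auto simp: scalar_prod_def intro!: sum.cong)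
    also have "\<dots> = (if ys!j0 = xs!k then 1 else 0)"
      using sum_sel[OF dy _ j0(2), of "\<lambda>j. (if ys!j = xs!k then 1 else 0)"] j0 len by simp
    also have "\<dots> = 1\<^sub>m n $$ (i,k)" using i k j0 dx unfolding n_def by (auto simp: nth_eq_iff_index_eq)
    finally show "(P * Q) $$ (i,k) = 1\<^sub>m n $$ (i,k)" .
  qed (auto simp: P_def Q_def)
  have QP: "Q * P = 1\<^sub>m n"
  proof (rule eq_matI)
    fix i k assume i: "i < dim_row (1\<^sub>m n)" and k: "k < dim_col (1\<^sub>m n)"
    obtain j0 where j0: "j0 < n" "ys!i = xs!j0" using iy i by auto
    have "(Q * P) $$ (i,k) = (\<Sum>j<n. (if ys!i = xs!j then (if xs!j = ys!k then 1 else 0) else 0))"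
      using i k unfolding P_def Q_def by (auto simp: scalar_prod_def intro!: sum.cong)
    also have "\<dots> = (if xs!j0 = ys!k then 1 else 0)"
      using sum_sel[OF dx _ j0(2), of "\<lambda>j. (if xs!j = ys!k then 1 else 0)"] j0 unfolding n_def by simp
    also have "\<dots> = 1\<^sub>m n $$ (i,k)" using i k j0 dy len by (auto simp: nth_eq_iff_index_eq)
    finally show "(Q * P) $$ (i,k) = 1\<^sub>m n $$ (i,k)" .
  qed (auto simp: P_def Q_def)
  have eq: "Lm xs f = P * Lm ys f * Q"
  proof (rule eq_matI)
    fix i k assume i: "i < dim_row (P * Lm ys f * Q)" and k: "k < dim_col (P * Lm ys f * Q)"
    hence i: "i < n" and k: "k < n" by (auto simp: P_def Q_def)
    obtain j0 where j0: "j0 < n" "xs!i = ys!j0" using ix i by auto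
    obtain l0 where l0: "l0 < n" "xs!k = ys!l0" using ix k by auto
    have PL: "(P * Lm ys f) $$ (i,l) = f (xs!i) (ys!l)" if l: "l < n" for l
    proof -
      have "(P * Lm ys f) $$ (i,l) = (\<Sum>j<n. (if xs!i = ys!j then f (ys!j) (ys!l) else 0))"
        using i l len unfolding P_def by (auto simp: scalar_prod_def intro!: sum.cong)
      also have "\<dots> = f (ys!j0) (ys!l)"
        using sum_sel[OF dy _ j0(2), of "\<lambda>j. f (ys!j) (ys!l)"] j0 len by simp
      finally show ?thesis using j0 by simp
    qed
    have "(P * Lm ys f * Q) $$ (i,k) = (\<Sum>l<n. (P * Lm ys f) $$ (i,l) * Q $$ (l,k))"
      using i k len unfolding Q_def by (simp add: P_def scalar_prod_def atLeast0LessThan)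
    also have "\<dots> = (\<Sum>l<n. f (xs!i) (ys!l) * (if ys!l = xs!k then 1 else 0))"
      using k PL unfolding Q_def by (auto intro!: sum.cong)
    also have "\<dots> = (\<Sum>l<n. (if xs!k = ys!l then f (xs!i) (ys!l) else 0))"
      by (rule sum.cong, auto)
    also have "\<dots> = f (xs!i) (ys!l0)"
      using sum_sel[OF dy _ l0(2), of "\<lambda>l. f (xs!i) (ys!l)"] l0 len by simp
    finally show "Lm xs f $$ (i,k) = (P * Lm ys f * Q) $$ (i,k)" using i k l0 unfolding n_def by simp
  qed (auto simp: P_def Q_def n_def len)
  show ?thesis unfolding similar_mat_def similar_mat_wit_def Let_def
    by (rule exI[of _ P], rule exI[of _ Q], insert PQ QP eq len, auto simp: P_def Q_def n_def)
qed

lemma Lm_append_block: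
  assumes "\<And>x y. x \<in> set xs \<Longrightarrow> y \<in> set ys \<Longrightarrow> f x y = 0 \<and> f y x = 0"
  shows "Lm (xs @ ys) f = four_block_mat (Lm xs f) (0\<^sub>m (length xs) (length ys)) (0\<^sub>m (length ys) (length xs)) (Lm ys f)"
  by (rule eq_matI, insert assms, auto simp: nth_append)

lemma char_poly_block_diag:
  fixes A D :: "'a::field mat"
  assumes A: "A \<in> carrier_mat n n" and D: "D \<in> carrier_mat m m"
  shows "char_poly (four_block_mat A (0\<^sub>m n m) (0\<^sub>m m n) D) = char_poly A * char_poly D"
proof -
  have "char_poly_matrix (four_block_mat A (0\<^sub>m n m) (0\<^sub>m m n) D)
      = four_block_mat (char_poly_matrix A) (0\<^sub>m n m) (0\<^sub>m m n) (char_poly_matrix D)"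
    by (rule eq_matI, insert A D, auto simp: char_poly_matrix_def)
  thus ?thesis unfolding char_poly_def
    by (simp, subst det_four_block_mat_upper_right_zero[of "char_poly_matrix A" n _ m], insert A D, auto)
qed

lemma char_poly_zero_mat: "char_poly (0\<^sub>m n n :: 'a::field mat) = [:0,1:]^n"
proof -
  have "char_poly (0\<^sub>m n n :: 'a mat) = (\<Prod> a \<leftarrow> diag_mat (0\<^sub>m n n :: 'a mat). [:- a, 1:])"
    by (rule char_poly_upper_triangular, auto simp: upper_triangular_def)
  also have "diag_mat (0\<^sub>m n n :: 'a mat) = replicate n 0" by (intro nth_equalityI) (auto simp: diag_mat_def)
  finally show ?thesis by (simp add: prod_list_replicate)
qed

lemma kernel_dim_mono:
  fixes A B :: "'a::field mat"
  assumes A: "A \<in> carrier_mat nrA nc" and B: "B \<in> carrier_mat nrB nc"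
    and sub: "mat_kernel A \<subseteq> mat_kernel B"
  shows "kernel_dim A \<le> kernel_dim B"
proof -
  interpret KA: kernel nrA nc A by (unfold_locales, rule A)
  interpret KB: kernel nrB nc B by (unfold_locales, rule B)
  obtain b where b: "finite b" "KA.basis b" using kernel_basis_exists[OF A] by blast
  obtain c where c: "finite c" "KB.basis c" using kernel_basis_exists[OF B] by blast
  have bA: "b \<subseteq> mat_kernel A" using b(2) unfolding KA.Ker.basis_def by auto
  have "KA.lin_indpt b" using b(2) unfolding KA.Ker.basis_def by auto
  hence "\<not> KA.NC.lin_dep b" using KA.lindep_same[OF bA] by simp
  hence li: "KB.lin_indpt b" using KB.lindep_same bA sub by auto
  have fd: "KB.Ker.fin_dim" using c unfolding KB.Ker.fin_dim_def KB.Ker.basis_def by auto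
  have "card b \<le> KB.dim" using KB.Ker.li_le_dim(2)[OF fd _ li] bA sub by auto
  moreover have "KA.dim = card b" using KA.Ker.dim_basis[OF b(1) b(2)] .
  ultimately show ?thesis by simp
qed

lemma rank_nullity_mat:
  fixes A :: "'a::field mat"
  assumes A: "A \<in> carrier_mat nr nc"
  shows "vec_space.rank nr A + kernel_dim A = nc"
proof -
  interpret NR: vec_space "TYPE('a)" nr .
  interpret NC: vec_space "TYPE('a)" nc .
  interpret KA: kernel nr nc A by (unfold_locales, rule A)
  interpret LM: linear_map class_ring "module_vec TYPE('a) nc" "module_vec TYPE('a) nr" "\<lambda>v. A *\<^sub>v v"
  proof (intro linear_map.intro)
    show "vectorspace class_ring (module_vec TYPE('a) nc)" by (rule vec_vs)
    show "vectorspace class_ring (module_vec TYPE('a) nr)" by (rule vec_vs)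
    show "mod_hom class_ring (module_vec TYPE('a) nc) (module_vec TYPE('a) nr) ((*\<^sub>v) A)"
      apply (intro mod_hom.intro mod_hom_axioms.intro)
        apply (rule NC.module_axioms)
       apply (rule NR.module_axioms)
      using A by (auto simp: module_hom_def mult_add_distrib_mat_vec mult_mat_vec)
  qed
  have fd: "NC.fin_dim" by simp
  from LM.rank_nullity_main(1)[OF fd]
  have rn: "vectorspace.dim class_ring (NR.vs LM.imT) + vectorspace.dim class_ring (NC.vs LM.kerT) = NC.dim" .
  have "LM.kerT = mat_kernel A"
    using A unfolding mod_hom.ker_def[OF LM.mod_hom_axioms] mat_kernel_def by auto
  hence k: "vectorspace.dim class_ring (NC.vs LM.kerT) = kernel_dim A"
    unfolding kernel_dim_def using A by simp
  have "LM.imT = NR.col_space A"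
    using A unfolding mod_hom.im_def[OF LM.mod_hom_axioms] NR.col_space_eq[OF A] by auto
  hence r: "vectorspace.dim class_ring (NR.vs LM.imT) = NR.rank A"
    unfolding NR.rank_def NR.col_space_def by simp
  show ?thesis using rn k r NC.dim_is_n by simp
qed

lemma dvd_prod_linear_split:
  fixes p :: "real poly"
  assumes "p dvd (\<Prod>a\<leftarrow>as. [:-a,1:])" "lead_coeff p = 1"
  shows "\<exists>bs. p = (\<Prod>b\<leftarrow>bs. [:-b,1:])"
  using assms
proof (induction as arbitrary: p)
  case Nil
  hence "is_unit p" by simp
  hence "degree p = 0" by (simp add: is_unit_iff_degree)
  then obtain c where "p = [:c:]" by (metis degree_eq_zeroE)
  with Nil have "p = 1" by (simp add: one_pCons)
  thus ?case by (intro exI[of _ "[]"]) simp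
next
  case (Cons a as)
  let ?q = "\<Prod>a\<leftarrow>as. [:-a,1:]"
  have pq: "p dvd [:-a,1:] * ?q" using Cons.prems by simp
  show ?case
  proof (cases "poly p a = 0")
    case True
    then obtain p' where p': "p = [:-a,1:] * p'" using poly_eq_0_iff_dvd by (metis dvdE)
    have "p' dvd ?q" using pq unfolding p' by (subst (asm) dvd_times_left_cancel_iff) auto
    moreover have "lead_coeff p' = 1"
    proof -
      have "lead_coeff p = lead_coeff [:-a,1:] * lead_coeff p'" unfolding p' by (rule lead_coeff_mult)
      thus ?thesis using Cons.prems(2) by simp
    qed
    ultimately obtain bs where "p' = (\<Prod>b\<leftarrow>bs. [:-b,1:])" using Cons.IH by blast
    thus ?thesis using p' by (intro exI[of _ "a # bs"]) simp
  next
    case False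
    have pr: "prime_elem [:-a,1::real:]" by (rule prime_elem_linear_field_poly) simp
    have "\<not> [:-a,1:] dvd p" using False poly_eq_0_iff_dvd by blast
    hence "coprime [:-a,1:] p" using pr prime_elem_imp_coprime by blast
    hence "coprime p [:-a,1:]" by (simp add: coprime_commute)
    hence "p dvd ?q" using pq coprime_dvd_mult_right_iff by blast
    thus ?thesis using Cons.IH Cons.prems(2) by blast
  qed
qed

lemma kernel_dim_le_order0:
  fixes A :: "real mat"
  assumes A: "A \<in> carrier_mat n n" and lin: "char_poly A = (\<Prod>a\<leftarrow>as. [:-a,1:])"
  shows "kernel_dim A \<le> Polynomial.order 0 (char_poly A)"
proof -
  obtain n_as where jnf: "jordan_nf A n_as" using jordan_nf_exists[OF A lin] by blast
  have cm: "char_matrix A 0 ^\<^sub>m 1 = A"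
  proof -
    have "char_matrix A 0 = A" unfolding char_matrix_def by (rule eq_matI, insert A, auto)
    thus ?thesis using A by simp
  qed
  have "kernel_dim A = dim_gen_eigenspace A 0 1" unfolding dim_gen_eigenspace_def cm ..
  also have "\<dots> = (\<Sum> n \<leftarrow> map fst [(n, e)\<leftarrow>n_as . e = 0]. min 1 n)" by (rule dim_gen_eigenspace[OF jnf])
  also have "\<dots> \<le> (\<Sum> n \<leftarrow> map fst [(n, e)\<leftarrow>n_as . e = 0]. n)" by (rule sum_list_mono) simp
  also have "\<dots> = Polynomial.order 0 (char_poly A)" unfolding jordan_nf_order[OF jnf]
    by (simp add: case_prod_beta' cong: filter_cong)
  finally show ?thesis .
qed

definition Pk :: "'a set \<Rightarrow> nat \<Rightarrow> 'a set set" where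
  "Pk V j = {X. X \<subseteq> V \<and> card X = j}"

lemma Pk_finite[simp]: "finite V \<Longrightarrow> finite (Pk V j)"
  unfolding Pk_def by (rule finite_subset[of _ "Pow V"]) auto

lemma sgn_face_sq[simp]: "sgn_face G T * sgn_face G T = 1"
  unfolding sgn_face_def by (simp add: power_mult_distrib[symmetric] flip: power_add) 

lemma card_less_insert:
  fixes x y :: "'a::linorder"
  assumes "finite S" "x \<notin> S"
  shows "card {v \<in> insert x S. v < y} = (if x < y then Suc (card {v\<in>S. v < y}) else card {v\<in>S. v < y})"
proof -
  have fin: "finite {v\<in>S. v < y}" using assms by simp
  show ?thesis
  proof (cases "x < y")
    case True
    hence "{v \<in> insert x S. v < y} = insert x {v\<in>S. v < y}" by auto
    thus ?thesis using True assms fin by simp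
  next
    case False
    hence "{v \<in> insert x S. v < y} = {v\<in>S. v < y}" by auto
    thus ?thesis using False by simp
  qed
qed

lemma sign_identity:
  fixes G G' :: "'a::linorder set"
  assumes fin: "finite G" "finite G'" and ne: "G \<noteq> G'" and cc: "card G = card G'"
    and cu: "card (G \<union> G') = Suc (card G)"
  shows "sgn_face G (G \<union> G') * sgn_face G' (G \<union> G') + sgn_face (G \<inter> G') G * sgn_face (G \<inter> G') G' = 0"
proof -
  let ?U = "G \<union> G'"
  have "card (?U - G) = 1" using cu fin by (simp add: card_Diff_subset)
  then obtain b where b: "?U - G = {b}" by (rule card_1_singletonE)
  have "card ?U = Suc (card G')" using cu cc by simp
  hence "card (?U - G') = 1" using fin by (simp add: card_Diff_subset)
  then obtain a where a: "?U - G' = {a}" by (rule card_1_singletonE)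
  have aG: "a \<in> G" "a \<notin> G'" and bG: "b \<in> G'" "b \<notin> G" using a b by auto
  have GI: "G - (G \<inter> G') = {a}" using a by auto
  have GI': "G' - (G \<inter> G') = {b}" using b by auto
  have U1: "?U = insert a G'" using a by auto
  have U2: "?U = insert b G" using b by auto
  have ab: "a \<noteq> b" using aG bG by auto
  define c1 where "c1 = card {v\<in>G'. v < b}"
  define c2 where "c2 = card {v\<in>G. v < a}"
  define c3 where "c3 = card {v\<in>G'. v < a}"
  define c4 where "c4 = card {v\<in>G. v < b}"
  have s1: "sgn_face G ?U = (-1) ^ card {v\<in>insert a G'. v < b}" unfolding sgn_face_def b U1[symmetric] by simp
  have s2: "sgn_face G' ?U = (-1) ^ card {v\<in>insert b G. v < a}" unfolding sgn_face_def a U2[symmetric] by simp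
  have s3: "sgn_face (G \<inter> G') G = (-1) ^ c2" unfolding sgn_face_def GI c2_def by simp
  have s4: "sgn_face (G \<inter> G') G' = (-1) ^ c1" unfolding sgn_face_def GI' c1_def by simp
  show ?thesis
  proof (cases "a < b")
    case True
    have "card {v\<in>insert a G'. v < b} = Suc c1" using card_less_insert[OF fin(2) aG(2)] True unfolding c1_def by simp
    moreover have "card {v\<in>insert b G. v < a} = c2" using card_less_insert[OF fin(1) bG(2), of a] True unfolding c2_def by simp
    ultimately show ?thesis unfolding s1 s2 s3 s4 by simp
  next
    case False
    hence ba: "b < a" using ab by simp
    have "card {v\<in>insert a G'. v < b} = c1" using card_less_insert[OF fin(2) aG(2), of b] ba unfolding c1_def by simp
    moreover have "card {v\<in>insert b G. v < a} = Suc c2" using card_less_insert[OF fin(1) bG(2)] ba unfolding c2_def by simp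
    ultimately show ?thesis unfolding s1 s2 s3 s4 by simp
  qed
qed

lemma sum_single_set:
  fixes f :: "'b \<Rightarrow> real"
  assumes "finite A" "x \<in> A" "\<And>y. y \<in> A \<Longrightarrow> y \<noteq> x \<Longrightarrow> f y = 0"
  shows "sum f A = f x"
proof -
  have "sum f A = f x + sum f (A - {x})" using assms(1,2) by (rule sum.remove)
  also have "sum f (A - {x}) = 0" using assms(3) by (intro sum.neutral) auto
  finally show ?thesis by simp
qed

lemma coef_identity:
  fixes G G' :: "'a::linorder set"
  assumes V: "finite V" and G: "G \<in> Pk V (Suc n)" and G': "G' \<in> Pk V (Suc n)"
  shows "(\<Sum>T\<in>Pk V (Suc (Suc n)). (if G \<subseteq> T then sgn_face G T else 0) * (if G' \<subseteq> T then sgn_face G' T else 0))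
       + (\<Sum>t\<in>Pk V n. (if t \<subseteq> G then sgn_face t G else 0) * (if t \<subseteq> G' then sgn_face t G' else 0))
       = (if G = G' then real (card V) else 0)"
proof -
  have GV: "G \<subseteq> V" "card G = Suc n" and G'V: "G' \<subseteq> V" "card G' = Suc n" using G G' unfolding Pk_def by auto
  have finG: "finite G" "finite G'" using GV G'V V finite_subset by auto
  show ?thesis
  proof (cases "G = G'")
    case True
    have e1: "(\<Sum>T\<in>Pk V (Suc (Suc n)). (if G \<subseteq> T then sgn_face G T else 0) * (if G \<subseteq> T then sgn_face G T else 0))
        = (\<Sum>T\<in>Pk V (Suc (Suc n)). (if G \<subseteq> T then 1 else 0))"
      by (rule sum.cong) auto
    have s1: "{T\<in>Pk V (Suc (Suc n)). G \<subseteq> T} = (\<lambda>x. insert x G) ` (V - G)"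
    proof
      show "{T\<in>Pk V (Suc (Suc n)). G \<subseteq> T} \<subseteq> (\<lambda>x. insert x G) ` (V - G)"
      proof
        fix T assume T: "T \<in> {T\<in>Pk V (Suc (Suc n)). G \<subseteq> T}"
        hence TV: "T \<subseteq> V" "card T = Suc (Suc n)" "G \<subseteq> T" unfolding Pk_def by auto
        have "finite T" using TV V finite_subset by auto
        hence "card (T - G) = 1" using TV GV by (simp add: card_Diff_subset finG)
        then obtain x where x: "T - G = {x}" by (rule card_1_singletonE)
        hence "T = insert x G" "x \<in> V - G" using TV by auto
        thus "T \<in> (\<lambda>x. insert x G) ` (V - G)" by auto
      qed
      show "(\<lambda>x. insert x G) ` (V - G) \<subseteq> {T\<in>Pk V (Suc (Suc n)). G \<subseteq> T}"
        using GV finG unfolding Pk_def by auto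
    qed
    have inj1: "inj_on (\<lambda>x. insert x G) (V - G)" unfolding inj_on_def by auto
    have c1: "card {T\<in>Pk V (Suc (Suc n)). G \<subseteq> T} = card V - Suc n"
      unfolding s1 card_image[OF inj1] using GV V by (simp add: card_Diff_subset finG)
    have e2: "(\<Sum>t\<in>Pk V n. (if t \<subseteq> G then sgn_face t G else 0) * (if t \<subseteq> G then sgn_face t G else 0))
        = (\<Sum>t\<in>Pk V n. (if t \<subseteq> G then 1 else 0))"
      by (rule sum.cong) auto
    have s2: "{t\<in>Pk V n. t \<subseteq> G} = (\<lambda>x. G - {x}) ` G"
    proof
      show "{t\<in>Pk V n. t \<subseteq> G} \<subseteq> (\<lambda>x. G - {x}) ` G"
      proof
        fix t assume t: "t \<in> {t\<in>Pk V n. t \<subseteq> G}"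
        hence tV: "card t = n" "t \<subseteq> G" unfolding Pk_def by auto
        hence "card (G - t) = 1" using GV finG by (simp add: card_Diff_subset finite_subset)
        then obtain x where x: "G - t = {x}" by (rule card_1_singletonE)
        hence "t = G - {x}" "x \<in> G" using tV by auto
        thus "t \<in> (\<lambda>x. G - {x}) ` G" by auto
      qed
      show "(\<lambda>x. G - {x}) ` G \<subseteq> {t\<in>Pk V n. t \<subseteq> G}"
        using GV finG unfolding Pk_def by auto
    qed
    have inj2: "inj_on (\<lambda>x. G - {x}) G" unfolding inj_on_def by auto
    have c2: "card {t\<in>Pk V n. t \<subseteq> G} = Suc n"
      unfolding s2 card_image[OF inj2] using GV by simp
    have le: "Suc n \<le> card V" using GV V card_mono by metis
    show ?thesis unfolding True[symmetric] e1 e2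
      using c1 c2 le V by (simp add: sum.If_cases Int_def of_nat_diff)
  next
    case False
    let ?U = "G \<union> G'" and ?I = "G \<inter> G'"
    have cUI: "card ?U + card ?I = Suc n + Suc n" using card_Un_Int[OF finG] GV G'V by simp
    have "\<not> G' \<subseteq> G" using False card_subset_eq finG GV G'V by metis
    hence "G \<subset> ?U" by auto
    hence cU: "card ?U > Suc n" using GV finG by (metis psubset_card_mono finite_UnI)
    have UV: "?U \<subseteq> V" "finite ?U" using GV G'V finG by auto
    have up: "(\<Sum>T\<in>Pk V (Suc (Suc n)). (if G \<subseteq> T then sgn_face G T else 0) * (if G' \<subseteq> T then sgn_face G' T else 0))
        = (if card ?U = Suc (Suc n) then sgn_face G ?U * sgn_face G' ?U else 0)"
    proof (cases "card ?U = Suc (Suc n)")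
      case True
      have mem: "?U \<in> Pk V (Suc (Suc n))" using True UV unfolding Pk_def by auto
      have uniq: "T = ?U" if "T \<in> Pk V (Suc (Suc n))" "G \<subseteq> T" "G' \<subseteq> T" for T
      proof -
        have h: "?U \<subseteq> T" "finite T" "card T = Suc (Suc n)" using that V unfolding Pk_def by (auto intro: finite_subset)
        show ?thesis using card_subset_eq[OF h(2) h(1)] h(3) True by simp
      qed
      have "(\<Sum>T\<in>Pk V (Suc (Suc n)). (if G \<subseteq> T then sgn_face G T else 0) * (if G' \<subseteq> T then sgn_face G' T else 0))
          = (if G \<subseteq> ?U then sgn_face G ?U else 0) * (if G' \<subseteq> ?U then sgn_face G' ?U else 0)"
        apply (rule sum_single_set[OF Pk_finite[OF V] mem]) subgoal for y using uniq[of y] by (cases "G \<subseteq> y"; cases "G' \<subseteq> y") auto done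
      thus ?thesis using True by simp
    next
      case False
      have cle: "card ?U \<le> card T" if "T \<in> Pk V (Suc (Suc n))" "G \<subseteq> T" "G' \<subseteq> T" for T
      proof -
        have h: "?U \<subseteq> T" "finite T" using that V unfolding Pk_def by (auto intro: finite_subset)
        show ?thesis by (rule card_mono[OF h(2) h(1)])
      qed
      have "\<not> (G \<subseteq> T \<and> G' \<subseteq> T)" if "T \<in> Pk V (Suc (Suc n))" for T
      proof
        assume "G \<subseteq> T \<and> G' \<subseteq> T"
        hence "card ?U \<le> card T" using cle that by blast
        moreover have "card T = Suc (Suc n)" using that unfolding Pk_def by simp
        ultimately show False using False cU by simp
      qed
      thus ?thesis using False by (intro trans[OF sum.neutral]) auto
    qed
    have dn: "(\<Sum>t\<in>Pk V n. (if t \<subseteq> G then sgn_face t G else 0) * (if t \<subseteq> G' then sgn_face t G' else 0))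
        = (if card ?I = n then sgn_face ?I G * sgn_face ?I G' else 0)"
    proof (cases "card ?I = n")
      case True
      have mem: "?I \<in> Pk V n" using True GV unfolding Pk_def by auto
      have uniq: "t = ?I" if "t \<in> Pk V n" "t \<subseteq> G" "t \<subseteq> G'" for t
      proof -
        have h: "t \<subseteq> ?I" "finite ?I" "card t = n" using that finG unfolding Pk_def by auto
        show ?thesis using card_subset_eq[OF h(2) h(1)] h(3) True by simp
      qed
      have "(\<Sum>t\<in>Pk V n. (if t \<subseteq> G then sgn_face t G else 0) * (if t \<subseteq> G' then sgn_face t G' else 0))
          = (if ?I \<subseteq> G then sgn_face ?I G else 0) * (if ?I \<subseteq> G' then sgn_face ?I G' else 0)"
        apply (rule sum_single_set[OF Pk_finite[OF V] mem]) subgoal for y using uniq[of y] by (cases "y \<subseteq> G"; cases "y \<subseteq> G'") auto done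
      thus ?thesis using True by simp
    next
      case False
      have cle: "card t \<le> card ?I" if "t \<subseteq> G" "t \<subseteq> G'" for t
        using that finG by (intro card_mono) auto
      have "card ?I < n" using False cUI cU by linarith
      have "\<not> (t \<subseteq> G \<and> t \<subseteq> G')" if "t \<in> Pk V n" for t
      proof
        assume "t \<subseteq> G \<and> t \<subseteq> G'"
        hence "card t \<le> card ?I" using cle by blast
        moreover have "card t = n" using that unfolding Pk_def by simp
        ultimately show False using \<open>card ?I < n\<close> by simp
      qed
      thus ?thesis using False by (intro trans[OF sum.neutral]) auto
    qed
    show ?thesis
    proof (cases "card ?U = Suc (Suc n)")
      case True
      hence "card ?I = n" using cUI by simp
      thus ?thesis unfolding up dn using True False sign_identity[OF finG False] GV G'V by simp
    next
      case F2: False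
      hence "card ?I \<noteq> n" using cUI cU by linarith
      thus ?thesis unfolding up dn using F2 False by simp
    qed
  qed
qed


lemma sq_expand:
  fixes c :: "'b \<Rightarrow> 'c \<Rightarrow> real"
  shows "(\<Sum>T\<in>A. (\<Sum>G\<in>B. c T G * \<phi> G)^2) = (\<Sum>G\<in>B. \<Sum>G'\<in>B. \<phi> G * \<phi> G' * (\<Sum>T\<in>A. c T G * c T G'))"
proof -
  have "(\<Sum>T\<in>A. (\<Sum>G\<in>B. c T G * \<phi> G)^2) = (\<Sum>T\<in>A. \<Sum>G\<in>B. \<Sum>G'\<in>B. (c T G * \<phi> G) * (c T G' * \<phi> G'))"
    by (simp add: power2_eq_square sum_product)
  also have "\<dots> = (\<Sum>G\<in>B. \<Sum>T\<in>A. \<Sum>G'\<in>B. (c T G * \<phi> G) * (c T G' * \<phi> G'))"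
    by (rule sum.swap)
  also have "\<dots> = (\<Sum>G\<in>B. \<Sum>G'\<in>B. \<Sum>T\<in>A. (c T G * \<phi> G) * (c T G' * \<phi> G'))"
    by (rule sum.cong[OF refl], rule sum.swap)
  also have "\<dots> = (\<Sum>G\<in>B. \<Sum>G'\<in>B. \<phi> G * \<phi> G' * (\<Sum>T\<in>A. c T G * c T G'))"
    by (rule sum.cong[OF refl], rule sum.cong[OF refl]) (simp add: sum_distrib_left mult_ac)
  finally show ?thesis .
qed

definition upf :: "'a::linorder set \<Rightarrow> nat \<Rightarrow> ('a set \<Rightarrow> real) \<Rightarrow> 'a set \<Rightarrow> real" where
  "upf V n \<phi> T = (\<Sum>G\<in>Pk V (Suc n). (if G \<subseteq> T then sgn_face G T else 0) * \<phi> G)"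

definition dnf :: "'a::linorder set \<Rightarrow> nat \<Rightarrow> ('a set \<Rightarrow> real) \<Rightarrow> 'a set \<Rightarrow> real" where
  "dnf V n \<phi> t = (\<Sum>G\<in>Pk V (Suc n). (if t \<subseteq> G then sgn_face t G else 0) * \<phi> G)"

lemma quad_identity:
  fixes V :: "'a::linorder set"
  assumes V: "finite V"
  shows "(\<Sum>T\<in>Pk V (Suc (Suc n)). (upf V n \<phi> T)^2) + (\<Sum>t\<in>Pk V n. (dnf V n \<phi> t)^2)
     = real (card V) * (\<Sum>G\<in>Pk V (Suc n). (\<phi> G)^2)"
proof -
  let ?B = "Pk V (Suc n)"
  let ?cu = "\<lambda>T G. (if G \<subseteq> T then sgn_face G T else 0)"
  let ?cd = "\<lambda>t G. (if t \<subseteq> G then sgn_face t G else 0)"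
  have "(\<Sum>T\<in>Pk V (Suc (Suc n)). (upf V n \<phi> T)^2) + (\<Sum>t\<in>Pk V n. (dnf V n \<phi> t)^2)
     = (\<Sum>G\<in>?B. \<Sum>G'\<in>?B. \<phi> G * \<phi> G' * (\<Sum>T\<in>Pk V (Suc (Suc n)). ?cu T G * ?cu T G'))
      + (\<Sum>G\<in>?B. \<Sum>G'\<in>?B. \<phi> G * \<phi> G' * (\<Sum>t\<in>Pk V n. ?cd t G * ?cd t G'))"
    unfolding upf_def dnf_def by (simp only: sq_expand)
  also have "\<dots> = (\<Sum>G\<in>?B. \<Sum>G'\<in>?B. \<phi> G * \<phi> G' * ((\<Sum>T\<in>Pk V (Suc (Suc n)). ?cu T G * ?cu T G')
        + (\<Sum>t\<in>Pk V n. ?cd t G * ?cd t G')))"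
    by (simp only: distrib_left sum.distrib)
  also have "\<dots> = (\<Sum>G\<in>?B. \<Sum>G'\<in>?B. \<phi> G * \<phi> G' * (if G = G' then real (card V) else 0))"
  proof (rule sum.cong[OF refl], rule sum.cong[OF refl])
    fix G G' assume "G \<in> ?B" "G' \<in> ?B"
    from coef_identity[OF V this]
    show "\<phi> G * \<phi> G' * ((\<Sum>T\<in>Pk V (Suc (Suc n)). ?cu T G * ?cu T G') + (\<Sum>t\<in>Pk V n. ?cd t G * ?cd t G'))
       = \<phi> G * \<phi> G' * (if G = G' then real (card V) else 0)" by simp
  qed
  also have "\<dots> = (\<Sum>G\<in>?B. \<phi> G * \<phi> G * real (card V))"
  proof (rule sum.cong[OF refl])
    fix G assume G: "G \<in> ?B"
    have "(\<Sum>G'\<in>?B. \<phi> G * \<phi> G' * (if G = G' then real (card V) else 0))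
        = (\<Sum>G'\<in>?B. (if G' = G then \<phi> G * \<phi> G' * real (card V) else 0))"
      by (rule sum.cong) auto
    also have "\<dots> = \<phi> G * \<phi> G * real (card V)" using G V by (simp add: sum.delta')
    finally show "(\<Sum>G'\<in>?B. \<phi> G * \<phi> G' * (if G = G' then real (card V) else 0)) = \<phi> G * \<phi> G * real (card V)" .
  qed
  also have "\<dots> = real (card V) * (\<Sum>G\<in>?B. (\<phi> G)^2)"
    by (simp add: sum_distrib_left power2_eq_square mult_ac)
  finally show ?thesis .
qed

lemma quad_bound:
  fixes V :: "'a::linorder set"
  assumes V: "finite V"
  shows "(\<Sum>T\<in>Pk V (Suc (Suc n)). (upf V n \<phi> T)^2) \<le> real (card V) * (\<Sum>G\<in>Pk V (Suc n). (\<phi> G)^2)"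
proof -
  have "0 \<le> (\<Sum>t\<in>Pk V n. (dnf V n \<phi> t)^2)" by (rule sum_nonneg) simp
  thus ?thesis using quad_identity[OF V, of n \<phi>] by linarith
qed

lemma face_list_props:
  assumes "finite (faces j S)"
  shows "distinct (face_list j S) \<and> set (face_list j S) = faces j S"
proof -
  obtain xs where "distinct xs \<and> set xs = faces j S" using finite_distinct_list[OF assms] by metis
  thus ?thesis unfolding face_list_def by (rule someI)
qed

lemma length_face_list:
  assumes "finite (faces j S)"
  shows "length (face_list j S) = card (faces j S)"
  using face_list_props[OF assms] by (metis distinct_card)

lemma cob_ind:
  assumes "finite (faces n K)"
  shows "cob K n (ind_face G) Fb = (if G \<in> faces n K \<and> G \<subseteq> Fb then sgn_face G Fb else 0)"
proof -
  have "cob K n (ind_face G) Fb = (\<Sum>G'\<in>{G' \<in> faces n K. G' \<subseteq> Fb}. (if G' = G then sgn_face G' Fb else 0))"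
    unfolding cob_def ind_face_def by (rule sum.cong) auto
  also have "\<dots> = (if G \<in> faces n K \<and> G \<subseteq> Fb then sgn_face G Fb else 0)"
  proof -
    have "finite {G' \<in> faces n K. G' \<subseteq> Fb}" using assms by simp
    from sum.delta[OF this, of G "\<lambda>G'. sgn_face G' Fb"] show ?thesis by simp
  qed
  finally show ?thesis .
qed

lemma sum_list_nth:
  assumes "distinct xs"
  shows "(\<Sum>k<length xs. g (xs!k)) = (\<Sum>x\<in>set xs. g x)"
proof -
  have "(\<Sum>x\<in>set xs. g x) = sum_list (map g xs)" using assms by (rule sum_list_distinct_conv_sum_set[symmetric])
  also have "\<dots> = (\<Sum>k<length xs. g (xs!k))" by (simp add: sum_list_sum_nth atLeast0LessThan)
  finally show ?thesis by simp
qed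

lemma up_lap_one:
  "up_lap K (\<lambda>F. 1) n \<phi> F = (\<Sum>Fb\<in>{Fb \<in> faces (Suc n) K. F \<subseteq> Fb}. sgn_face F Fb * cob K n \<phi> Fb)"
  unfolding up_lap_def cob_adj_def by simp


lemma cob_expand:
  assumes "finite (faces n K)"
  shows "cob K n \<phi> Fb = (\<Sum>G\<in>faces n K. (if G \<subseteq> Fb then sgn_face G Fb else 0) * \<phi> G)"
proof -
  have "cob K n \<phi> Fb = (\<Sum>G\<in>faces n K. if G \<subseteq> Fb then sgn_face G Fb * \<phi> G else 0)"
    unfolding cob_def using assms by (simp add: sum.inter_filter)
  thus ?thesis by (auto intro!: sum.cong)
qed

lemma up_lap_expand:
  assumes "finite (faces (Suc n) K)"
  shows "up_lap K (\<lambda>F. 1) n \<phi> G = (\<Sum>Fb\<in>faces (Suc n) K. (if G \<subseteq> Fb then sgn_face G Fb else 0) * cob K n \<phi> Fb)"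
proof -
  have "up_lap K (\<lambda>F. 1) n \<phi> G = (\<Sum>Fb\<in>faces (Suc n) K. if G \<subseteq> Fb then sgn_face G Fb * cob K n \<phi> Fb else 0)"
    unfolding up_lap_one using assms by (simp add: sum.inter_filter)
  thus ?thesis by (auto intro!: sum.cong)
qed

lemma quad_form:
  assumes f1: "finite (faces n K)" and f2: "finite (faces (Suc n) K)"
  shows "(\<Sum>G\<in>faces n K. \<phi> G * up_lap K (\<lambda>F. 1) n \<phi> G) = (\<Sum>Fb\<in>faces (Suc n) K. (cob K n \<phi> Fb)^2)"
proof -
  let ?c = "\<lambda>G Fb. (if G \<subseteq> Fb then sgn_face G Fb else 0)"
  have "(\<Sum>G\<in>faces n K. \<phi> G * up_lap K (\<lambda>F. 1) n \<phi> G)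
      = (\<Sum>G\<in>faces n K. \<Sum>Fb\<in>faces (Suc n) K. \<phi> G * (?c G Fb * cob K n \<phi> Fb))"
    by (simp add: up_lap_expand[OF f2] sum_distrib_left)
  also have "\<dots> = (\<Sum>Fb\<in>faces (Suc n) K. \<Sum>G\<in>faces n K. \<phi> G * (?c G Fb * cob K n \<phi> Fb))"
    by (rule sum.swap)
  also have "\<dots> = (\<Sum>Fb\<in>faces (Suc n) K. cob K n \<phi> Fb * (\<Sum>G\<in>faces n K. ?c G Fb * \<phi> G))"
    by (simp add: sum_distrib_left mult_ac)
  also have "\<dots> = (\<Sum>Fb\<in>faces (Suc n) K. (cob K n \<phi> Fb)^2)"
    by (simp add: cob_expand[OF f1] power2_eq_square)
  finally show ?thesis .
qed

lemma eig_bound: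
  fixes V :: "'a::linorder set" and K :: "'a set set"
  assumes KV: "K \<subseteq> Pow V" and V: "finite V"
    and ev: "poly (char_poly (up_lap_mat K (\<lambda>F. 1) n)) x = 0"
  shows "0 \<le> x \<and> x \<le> real (card V)"
proof -
  have fK: "finite K" using KV V by (meson finite_Pow_iff finite_subset)
  have ff: "finite (faces j K)" for j using fK unfolding faces_def by simp
  define fl where "fl = face_list n K"
  define N where "N = length fl"
  have dfl: "distinct fl" "set fl = faces n K" using face_list_props[OF ff] unfolding fl_def by auto
  define a where "a F G = up_lap K (\<lambda>F. 1) n (ind_face G) F" for F G
  have A: "up_lap_mat K (\<lambda>F. 1) n = Lm fl a" unfolding up_lap_mat_def Lm_def Let_def fl_def a_def by simp
  let ?A = "Lm fl a"
  have "eigenvalue ?A x" using eigenvalue_root_char_poly[OF Lm_carrier[of fl a]] ev A by simp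
  then obtain v where v: "v \<in> carrier_vec N" "v \<noteq> 0\<^sub>v N" "?A *\<^sub>v v = x \<cdot>\<^sub>v v"
    unfolding eigenvalue_def eigenvector_def N_def by auto
  define \<phi> where "\<phi> G = (\<Sum>i<N. if G = fl!i then v$i else 0)" for G
  have \<phi>i: "\<phi> (fl!i) = v$i" if "i < N" for i
    unfolding \<phi>_def N_def by (rule sum_sel[OF dfl(1)], insert that N_def, auto)
  define cK where "cK G Fb = (if G \<in> faces n K \<and> G \<subseteq> Fb then sgn_face G Fb else 0)" for G Fb
  have cobk: "cob K n \<phi> Fb = (\<Sum>k<N. cK (fl!k) Fb * v$k)" for Fb
  proof -
    have "cob K n \<phi> Fb = (\<Sum>G\<in>faces n K. cK G Fb * \<phi> G)"
      unfolding cob_expand[OF ff] cK_def by (rule sum.cong) auto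
    also have "\<dots> = (\<Sum>k<N. cK (fl!k) Fb * \<phi> (fl!k))"
      unfolding N_def dfl(2)[symmetric] by (rule sum_list_nth[OF dfl(1), symmetric])
    also have "\<dots> = (\<Sum>k<N. cK (fl!k) Fb * v$k)" using \<phi>i by simp
    finally show ?thesis .
  qed
  have aeq: "a F G = (\<Sum>Fb\<in>{Fb \<in> faces (Suc n) K. F \<subseteq> Fb}. sgn_face F Fb * cK G Fb)" for F G
    unfolding a_def up_lap_one cob_ind[OF ff] cK_def ..
  have Av: "(?A *\<^sub>v v)$i = up_lap K (\<lambda>F. 1) n \<phi> (fl!i)" if i: "i < N" for i
  proof -
    let ?S = "{Fb \<in> faces (Suc n) K. fl!i \<subseteq> Fb}"
    have "(?A *\<^sub>v v)$i = (\<Sum>k<N. a (fl!i) (fl!k) * v$k)"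
      using i v(1) unfolding N_def by (simp add: scalar_prod_def atLeast0LessThan)
    also have "\<dots> = (\<Sum>k<N. \<Sum>Fb\<in>?S. sgn_face (fl!i) Fb * cK (fl!k) Fb * v$k)"
      unfolding aeq by (simp add: sum_distrib_right)
    also have "\<dots> = (\<Sum>Fb\<in>?S. \<Sum>k<N. sgn_face (fl!i) Fb * cK (fl!k) Fb * v$k)"
      by (rule sum.swap)
    also have "\<dots> = (\<Sum>Fb\<in>?S. sgn_face (fl!i) Fb * cob K n \<phi> Fb)"
      unfolding cobk by (simp add: sum_distrib_left mult_ac)
    also have "\<dots> = up_lap K (\<lambda>F. 1) n \<phi> (fl!i)" unfolding up_lap_one ..
    finally show ?thesis .
  qed
  have eigf: "up_lap K (\<lambda>F. 1) n \<phi> G = x * \<phi> G" if G: "G \<in> faces n K" for G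
  proof -
    obtain i where i: "i < N" "G = fl!i" using G dfl(2) unfolding N_def by (metis in_set_conv_nth)
    have "(?A *\<^sub>v v)$i = x * v$i" using v(3) i(1) v(1) by simp
    thus ?thesis using Av[OF i(1)] \<phi>i[OF i(1)] i(2) by simp
  qed
  define S where "S = (\<Sum>G\<in>faces n K. (\<phi> G)^2)"
  define Q where "Q = (\<Sum>Fb\<in>faces (Suc n) K. (cob K n \<phi> Fb)^2)"
  have xSQ: "x * S = Q"
  proof -
    have "Q = (\<Sum>G\<in>faces n K. \<phi> G * up_lap K (\<lambda>F. 1) n \<phi> G)" unfolding Q_def by (rule quad_form[OF ff ff, symmetric])
    also have "\<dots> = (\<Sum>G\<in>faces n K. x * (\<phi> G)^2)" by (rule sum.cong) (auto simp: eigf power2_eq_square)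
    finally show ?thesis unfolding S_def by (simp add: sum_distrib_left)
  qed
  have Spos: "S > 0"
  proof -
    have "S = (\<Sum>k<N. (\<phi> (fl!k))^2)" unfolding S_def N_def dfl(2)[symmetric] by (rule sum_list_nth[OF dfl(1), symmetric])
    also have "\<dots> = (\<Sum>k<N. (v$k)^2)" using \<phi>i by simp
    finally have S: "S = (\<Sum>k<N. (v$k)^2)" .
    obtain k where k: "k < N" "v$k \<noteq> 0" using v(1,2) by (metis carrier_vecD eq_vecI index_zero_vec)
    have "(v$k)^2 \<le> (\<Sum>k<N. (v$k)^2)" by (rule member_le_sum) (use k in auto)
    moreover have "(v$k)^2 > 0" using k by simp
    ultimately show ?thesis using S by linarith
  qed
  have Qnn: "Q \<ge> 0" unfolding Q_def by (rule sum_nonneg) simp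
  have Qle: "Q \<le> real (card V) * S"
  proof -
    have F1: "faces (Suc n) K \<subseteq> Pk V (Suc (Suc n))" using KV unfolding faces_def Pk_def by auto
    have F0: "faces n K \<subseteq> Pk V (Suc n)" using KV unfolding faces_def Pk_def by auto
    have \<phi>0: "\<phi> G = 0" if "G \<notin> faces n K" for G
      unfolding \<phi>_def using that dfl(2) unfolding N_def by (auto intro!: sum.neutral)
    have cu: "cob K n \<phi> Fb = upf V n \<phi> Fb" for Fb
      unfolding cob_expand[OF ff] upf_def
      by (rule sum.mono_neutral_left[OF Pk_finite[OF V] F0]) (auto simp: \<phi>0)
    have "Q = (\<Sum>Fb\<in>faces (Suc n) K. (upf V n \<phi> Fb)^2)" unfolding Q_def cu ..
    also have "\<dots> \<le> (\<Sum>Fb\<in>Pk V (Suc (Suc n)). (upf V n \<phi> Fb)^2)"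
      by (rule sum_mono2[OF Pk_finite[OF V] F1]) simp
    also have "\<dots> \<le> real (card V) * (\<Sum>G\<in>Pk V (Suc n). (\<phi> G)^2)" by (rule quad_bound[OF V])
    also have "(\<Sum>G\<in>Pk V (Suc n). (\<phi> G)^2) = S" unfolding S_def
      by (rule sum.mono_neutral_right[OF Pk_finite[OF V] F0]) (auto simp: \<phi>0)
    finally show ?thesis .
  qed
  have "0 \<le> x" using xSQ Spos Qnn by (metis not_le mult_neg_pos less_le_trans order.refl)
  moreover have "x \<le> real (card V)" using xSQ Spos Qle by (metis mult_le_cancel_right_pos mult.commute)
  ultimately show ?thesis ..
qed

lemma rank_le_nr:
  fixes A :: "'a::field mat"
  assumes A: "A \<in> carrier_mat nr nc"
  shows "vec_space.rank nr A \<le> nr"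
proof -
  interpret NR: vec_space "TYPE('a)" nr .
  have sub: "subspace class_ring (NR.span (set (cols A))) NR.V"
    using A by (intro NR.span_is_subspace) (metis carrier_matD(1) cols_dim)
  have "vectorspace.dim class_ring (NR.vs (NR.span (set (cols A)))) \<le> NR.dim"
    by (rule NR.subspace_dim[OF sub NR.fin_dim NR.fin_dim_span_cols[OF A]])
  thus ?thesis unfolding NR.rank_def NR.dim_is_n by simp
qed

lemma kernel_dim_zero_rows:
  fixes A :: "'a::field mat"
  assumes A: "A \<in> carrier_mat 0 nc"
  shows "kernel_dim A = nc"
proof -
  have "A = 0\<^sub>m 0 nc" by (rule eq_matI, insert A, auto)
  hence "vec_space.rank 0 A = 0" by (simp add: vec_space.rank_0I)
  thus ?thesis using rank_nullity_mat[OF A] by simp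
qed

lemma order_linear: "Polynomial.order x [:-c, 1::real:] = (if x = c then 1 else 0)"
  using order_linear_power[of x "-c" 1] by auto

lemma mset_order:
  fixes f :: "nat \<Rightarrow> real"
  shows "count (image_mset f (mset_set {1..N})) x = Polynomial.order x (\<Prod>k=1..N. [:-f k, 1:])"
proof (induction N)
  case 0 thus ?case by simp
next
  case (Suc N)
  have ins: "{1..Suc N} = insert (Suc N) {1..N}" by auto
  have nz: "(\<Prod>k=1..N. [:-f k, 1:]) \<noteq> 0" by (simp add: prod_zero_iff)
  have "Polynomial.order x (\<Prod>k=1..Suc N. [:-f k, 1:]) = Polynomial.order x ([:-f (Suc N), 1:] * (\<Prod>k=1..N. [:-f k, 1:]))"
    unfolding ins by simp
  also have "\<dots> = Polynomial.order x [:-f (Suc N), 1:] + Polynomial.order x (\<Prod>k=1..N. [:-f k, 1:])"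
    by (rule order_mult) (use nz in \<open>metis mult_eq_0_iff pCons_eq_0_iff one_neq_zero\<close>)
  finally show ?case unfolding ins using Suc by (simp add: order_linear)
qed

lemma Lm_cong:
  assumes "\<And>x y. x \<in> set xs \<Longrightarrow> y \<in> set xs \<Longrightarrow> f x y = g x y"
  shows "Lm xs f = Lm xs g"
  by (rule eq_matI, insert assms, auto)

lemma prod_upt_list:
  fixes g :: "nat \<Rightarrow> 'b::comm_monoid_mult"
  shows "(\<Prod>k=1..N. g k) = prod_list (map g [1..<Suc N])"
proof -
  have "(\<Prod>k=1..N. g k) = prod g (set [1..<Suc N])" by (simp only: set_upt atLeastLessThanSuc_atLeastAtMost)
  also have "\<dots> = prod_list (map g [1..<Suc N])" by (rule prod.distinct_set_conv_list) simp
  finally show ?thesis .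
qed


lemma main_part:
  fixes V :: "'a::linorder set" and K H :: "'a set set" and n :: nat
    and lam theta :: "nat \<Rightarrow> real"
  assumes K: "complex_on V K"
    and H: "is_complex H" "H \<subseteq> K" "complex_dim H (n+1)"
    and L: "is_complex {F \<in> K. (\<lambda>F. (1::real) - (if F \<in> H then 1 else 0)) F > 0}"
    and lam: "\<forall>i j. 1 \<le> i \<longrightarrow> i \<le> j \<longrightarrow> j \<le> card (faces n K) \<longrightarrow> lam i \<le> lam j"
      "char_poly (up_lap_mat K (\<lambda>F. 1) n) = (\<Prod>k=1..card (faces n K). [:- lam k, 1:])"
    and theta: "\<forall>i j. 1 \<le> i \<longrightarrow> i \<le> j \<longrightarrow> j \<le> card (faces n K) \<longrightarrow> theta i \<le> theta j"
      "char_poly (up_lap_mat K (\<lambda>F. (1::real) - (if F \<in> H then 1 else 0)) n)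
         = (\<Prod>k=1..card (faces n K). [:- theta k, 1:])"
  shows "\<exists>RH RM. image_mset lam (mset_set {1..card (faces n K)}) = RH + RM
     \<and> image_mset theta (mset_set {1..card (faces n K)}) = replicate_mset (card (faces n H)) 0 + RM
     \<and> size RH = card (faces n H)
     \<and> count RH 0 \<ge> card (faces n H) - (card (faces (n+1) H) - cohom_dim_succ H n)
     \<and> (\<forall>x\<in>#RH + RM. 0 \<le> x \<and> x \<le> real (card V))"
proof -
  define wL where "wL = (\<lambda>F. (1::real) - (if F \<in> H then 1 else 0))"
  define N where "N = card (faces n K)"
  define DH where "DH = card (faces n H)"
  have V: "finite V" and KV: "K \<subseteq> Pow V" and Kc: "is_complex K" using K unfolding complex_on_def by auto
  have fK: "finite K" using KV V by (meson finite_Pow_iff finite_subset)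
  have fH: "finite H" using H(2) fK finite_subset by auto
  have ffK: "finite (faces j K)" for j using fK unfolding faces_def by simp
  have ffH: "finite (faces j H)" for j using fH unfolding faces_def by simp
  have ffM: "finite (faces j (K - H))" for j using fK unfolding faces_def by simp
  have hH: "G \<in> H" if "F \<in> H" "G \<subseteq> F" "G \<noteq> {}" for F G
    using H(1) that unfolding is_complex_def by blast
  have Lset: "{F \<in> K. (\<lambda>F. (1::real) - (if F \<in> H then 1 else 0)) F > 0} = K - H" by auto
  have hM: "G \<in> K \<and> G \<notin> H" if "F \<in> K" "F \<notin> H" "G \<subseteq> F" "G \<noteq> {}" for F G
    using L that unfolding Lset is_complex_def by blast
  have ne: "F \<noteq> {}" if "F \<in> faces j S" for F j S using that unfolding faces_def by auto
  define fl where "fl = face_list n K"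
  define hs where "hs = face_list n H"
  define ms where "ms = face_list n (K - H)"
  have dfl: "distinct fl" "set fl = faces n K" using face_list_props[OF ffK] unfolding fl_def by auto
  have dhs: "distinct hs" "set hs = faces n H" using face_list_props[OF ffH] unfolding hs_def by auto
  have dms: "distinct ms" "set ms = faces n (K - H)" using face_list_props[OF ffM] unfolding ms_def by auto
  have lhs: "length hs = DH" unfolding hs_def DH_def by (rule length_face_list[OF ffH])
  have lfl: "length fl = N" unfolding fl_def N_def by (rule length_face_list[OF ffK])
  have fHK: "faces j H \<subseteq> faces j K" for j using H(2) unfolding faces_def by auto
  have dhm: "distinct (hs @ ms)" using dhs dms unfolding faces_def by auto
  have shm: "set (hs @ ms) = set fl" using dhs dms dfl H(2) unfolding faces_def by auto
  define cK where "cK G Fb = (if G \<in> faces n K \<and> G \<subseteq> Fb then sgn_face G Fb else 0)" for G Fb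
  define a where "a F G = up_lap K (\<lambda>F. 1) n (ind_face G) F" for F G
  have aeq: "a F G = (\<Sum>Fb\<in>{Fb \<in> faces (Suc n) K. F \<subseteq> Fb}. sgn_face F Fb * cK G Fb)" for F G
    unfolding a_def up_lap_one cob_ind[OF ffK] cK_def ..
  define b where "b F G = (if F \<in> H then 0 else a F G)" for F G
  have beq: "up_lap K wL n (ind_face G) F = b F G" if F: "F \<in> faces n K" for F G
  proof (cases "F \<in> H")
    case True thus ?thesis unfolding b_def up_lap_def cob_adj_def wL_def by simp
  next
    case False
    have "up_lap K wL n (ind_face G) F = (\<Sum>Fb\<in>{Fb \<in> faces (n+1) K. F \<subseteq> Fb}. (wL Fb / wL F) * sgn_face F Fb * cob K n (ind_face G) Fb)"
      unfolding up_lap_def cob_adj_def using False by (simp add: wL_def)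
    also have "\<dots> = (\<Sum>Fb\<in>{Fb \<in> faces (Suc n) K. F \<subseteq> Fb}. sgn_face F Fb * cob K n (ind_face G) Fb)"
    proof (rule sum.cong)
      fix Fb assume Fb: "Fb \<in> {Fb \<in> faces (Suc n) K. F \<subseteq> Fb}"
      have "Fb \<notin> H" using hH[of Fb F] Fb False ne[OF F] by auto
      thus "(wL Fb / wL F) * sgn_face F Fb * cob K n (ind_face G) Fb = sgn_face F Fb * cob K n (ind_face G) Fb"
        using False by (simp add: wL_def)
    qed simp
    finally show ?thesis unfolding b_def a_def up_lap_one using False by simp
  qed
  have A: "up_lap_mat K (\<lambda>F. 1) n = Lm fl a" unfolding up_lap_mat_def Lm_def Let_def fl_def a_def by simp
  have B: "up_lap_mat K wL n = Lm fl b"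
  proof -
    have "up_lap_mat K wL n = Lm fl (\<lambda>F G. up_lap K wL n (ind_face G) F)"
      unfolding up_lap_mat_def Lm_def Let_def fl_def by simp
    also have "\<dots> = Lm fl b" by (rule Lm_cong) (use beq dfl in auto)
    finally show ?thesis .
  qed
  have cross: "a F G = 0 \<and> a G F = 0" if F: "F \<in> faces n H" and G: "G \<in> faces n (K - H)" for F G
  proof -
    have FH: "F \<in> H" "F \<noteq> {}" using F ne[OF F] unfolding faces_def by auto
    have GK: "G \<in> K" "G \<notin> H" "G \<noteq> {}" using G ne[OF G] unfolding faces_def by auto
    have z: "sgn_face X Fb * cK Y Fb = 0" if "Fb \<in> faces (Suc n) K" "X \<subseteq> Fb" "(X = F \<and> Y = G) \<or> (X = G \<and> Y = F)" for X Y Fb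
    proof (cases "Y \<subseteq> Fb")
      case True
      have "F \<subseteq> Fb" "G \<subseteq> Fb" using that(2,3) True by blast+
      moreover have FbK: "Fb \<in> K" using that unfolding faces_def by auto
      ultimately have False using hH[of Fb G] hM[of Fb F] FH GK by blast
      thus ?thesis ..
    qed (simp add: cK_def)
    have "a F G = 0" unfolding aeq by (rule sum.neutral) (use z[of _ F G] in auto)
    moreover have "a G F = 0" unfolding aeq by (rule sum.neutral) (use z[of _ G F] in auto)
    ultimately show ?thesis ..
  qed
  have crossb: "b F G = 0 \<and> b G F = 0" if "F \<in> faces n H" "G \<in> faces n (K - H)" for F G
    using cross[OF that] unfolding b_def by simp
  have simA: "char_poly (Lm fl a) = char_poly (Lm (hs @ ms) a)"
    by (rule char_poly_similar, rule Lm_perm_similar[OF dfl(1) dhm shm[symmetric]])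
  have simB: "char_poly (Lm fl b) = char_poly (Lm (hs @ ms) b)"
    by (rule char_poly_similar, rule Lm_perm_similar[OF dfl(1) dhm shm[symmetric]])
  define pH where "pH = char_poly (Lm hs a)"
  define pM where "pM = char_poly (Lm ms a)"
  have cA: "char_poly (up_lap_mat K (\<lambda>F. 1) n) = pH * pM"
    unfolding A simA pH_def pM_def
    by (subst Lm_append_block, use cross dhs dms in blast, rule char_poly_block_diag) auto
  have bH: "Lm hs b = 0\<^sub>m DH DH"
  proof (rule eq_matI)
    fix i k assume "i < dim_row (0\<^sub>m DH DH :: real mat)" "k < dim_col (0\<^sub>m DH DH :: real mat)"
    hence i: "i < length hs" "k < length hs" using lhs by auto
    have "hs!i \<in> H" using nth_mem[OF i(1)] dhs(2) unfolding faces_def by auto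
    thus "Lm hs b $$ (i,k) = 0\<^sub>m DH DH $$ (i,k)" using i lhs by (simp add: b_def)
  qed (use lhs in auto)
  have bM: "Lm ms b = Lm ms a" by (rule Lm_cong) (use dms in \<open>auto simp: b_def faces_def\<close>)
  have cB: "char_poly (up_lap_mat K wL n) = [:0,1:]^DH * pM"
  proof -
    have "char_poly (up_lap_mat K wL n) = char_poly (Lm hs b) * char_poly (Lm ms b)"
      unfolding B simB
      by (subst Lm_append_block, use crossb dhs dms in blast, rule char_poly_block_diag) auto
    thus ?thesis unfolding bH bM pM_def char_poly_zero_mat .
  qed
  define gl where "gl = face_list (Suc n) H"
  define f where "f = card (faces (Suc n) H)"
  have dgl: "distinct gl" "set gl = faces (Suc n) H" using face_list_props[OF ffH] unfolding gl_def by auto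
  have lgl: "length gl = f" unfolding gl_def f_def by (rule length_face_list[OF ffH])
  define \<delta> where "\<delta> = cob_mat H n"
  define cH where "cH G Fb = (if G \<in> faces n H \<and> G \<subseteq> Fb then sgn_face G Fb else 0)" for G Fb
  have gl1: "face_list (n+1) H = gl" unfolding gl_def by simp
  have \<delta>def: "\<delta> = mat f DH (\<lambda>(i,k). cH (hs!k) (gl!i))"
    unfolding \<delta>_def cob_mat_def Let_def gl1 hs_def[symmetric] cob_ind[OF ffH] cH_def
    by (simp add: lgl lhs)
  have \<delta>c: "\<delta> \<in> carrier_mat f DH" unfolding \<delta>def by simp
  have aH: "a F G = (\<Sum>Fb\<in>faces (Suc n) H. cH F Fb * cH G Fb)" if F: "F \<in> faces n H" and G: "G \<in> faces n H" for F G
  proof -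
    have seteq: "{Fb \<in> faces (Suc n) K. F \<subseteq> Fb} = {Fb \<in> faces (Suc n) H. F \<subseteq> Fb}"
    proof
      show "{Fb \<in> faces (Suc n) K. F \<subseteq> Fb} \<subseteq> {Fb \<in> faces (Suc n) H. F \<subseteq> Fb}"
      proof
        fix Fb assume Fb: "Fb \<in> {Fb \<in> faces (Suc n) K. F \<subseteq> Fb}"
        have FH: "F \<in> H" using F unfolding faces_def by simp
        have "Fb \<in> H" using hM[of Fb F] Fb FH ne[OF F] unfolding faces_def by blast
        thus "Fb \<in> {Fb \<in> faces (Suc n) H. F \<subseteq> Fb}" using Fb unfolding faces_def by simp
      qed
      show "{Fb \<in> faces (Suc n) H. F \<subseteq> Fb} \<subseteq> {Fb \<in> faces (Suc n) K. F \<subseteq> Fb}" using fHK by blast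
    qed
    have "a F G = (\<Sum>Fb\<in>{Fb \<in> faces (Suc n) H. F \<subseteq> Fb}. sgn_face F Fb * cK G Fb)" unfolding aeq seteq ..
    also have "\<dots> = (\<Sum>Fb\<in>faces (Suc n) H. if F \<subseteq> Fb then sgn_face F Fb * cK G Fb else 0)"
      using ffH by (simp add: sum.inter_filter)
    also have "\<dots> = (\<Sum>Fb\<in>faces (Suc n) H. cH F Fb * cH G Fb)"
      by (rule sum.cong) (use F G fHK in \<open>auto simp: cH_def cK_def\<close>)
    finally show ?thesis .
  qed
  have AH: "Lm hs a = transpose_mat \<delta> * \<delta>"
  proof (rule eq_matI)
    fix i k assume "i < dim_row (transpose_mat \<delta> * \<delta>)" "k < dim_col (transpose_mat \<delta> * \<delta>)"
    hence i: "i < DH" and k: "k < DH" using \<delta>c by auto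
    have hi: "hs!i \<in> faces n H" "hs!k \<in> faces n H" using i k lhs dhs(2) nth_mem by auto
    have "(transpose_mat \<delta> * \<delta>) $$ (i,k) = (\<Sum>j<f. cH (hs!i) (gl!j) * cH (hs!k) (gl!j))"
      using i k unfolding \<delta>def by (simp add: scalar_prod_def atLeast0LessThan)
    also have "\<dots> = (\<Sum>Fb\<in>faces (Suc n) H. cH (hs!i) Fb * cH (hs!k) Fb)"
      using sum_list_nth[OF dgl(1), of "\<lambda>Fb. cH (hs!i) Fb * cH (hs!k) Fb"] unfolding lgl dgl(2) .
    also have "\<dots> = a (hs!i) (hs!k)" using aH[OF hi] ..
    finally show "Lm hs a $$ (i,k) = (transpose_mat \<delta> * \<delta>) $$ (i,k)" using i k lhs by simp
  qed (use \<delta>c lhs in auto)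
  have kd1: "kernel_dim \<delta> \<le> kernel_dim (Lm hs a)"
    unfolding AH by (rule kernel_dim_mono[OF \<delta>c _ mat_kernel_mult_subset[OF \<delta>c]]) (use \<delta>c in auto)
  define r where "r = vec_space.rank f \<delta>"
  have rn: "r + kernel_dim \<delta> = DH" unfolding r_def by (rule rank_nullity_mat[OF \<delta>c])
  have rf: "r \<le> f" unfolding r_def by (rule rank_le_nr[OF \<delta>c])
  have f2: "faces (Suc (Suc n)) H = {}" using H(3) unfolding complex_dim_def faces_def by fastforce
  have c2: "cob_mat H (n+1) \<in> carrier_mat 0 f"
    unfolding cob_mat_def Let_def
    using length_face_list[OF ffH, of "Suc (Suc n)"] f2 lgl unfolding gl_def by simp
  have DW: "card (faces (n+1) H) - cohom_dim_succ H n = r"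
    unfolding cohom_dim_succ_def kernel_dim_zero_rows[OF c2] using rf
    by (simp add: f_def[symmetric] \<delta>_def[symmetric] r_def \<delta>c[THEN carrier_matD(1)])
  have chA: "char_poly (up_lap_mat K (\<lambda>F. 1) n) = (\<Prod>a\<leftarrow>map lam [1..<Suc N]. [:-a,1:])"
    unfolding lam(2) N_def[symmetric] prod_upt_list by (simp add: comp_def)
  have "pH dvd char_poly (up_lap_mat K (\<lambda>F. 1) n)" unfolding cA by simp
  moreover have "lead_coeff pH = 1" unfolding pH_def using degree_monic_char_poly[OF Lm_carrier[of hs a]] by simp
  ultimately obtain bs where bs: "pH = (\<Prod>b\<leftarrow>bs. [:-b,1:])" using dvd_prod_linear_split unfolding chA by blast
  have o0: "kernel_dim (Lm hs a) \<le> Polynomial.order 0 pH"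
    unfolding pH_def by (rule kernel_dim_le_order0[OF Lm_carrier], fold pH_def, rule bs)
  have zH: "Polynomial.order 0 pH \<ge> DH - r" using o0 kd1 rn by linarith
  define Mla where "Mla = image_mset lam (mset_set {1..N})"
  define Mth where "Mth = image_mset theta (mset_set {1..N})"
  have nzA: "pH * pM \<noteq> 0" unfolding cA[symmetric] lam(2) by (simp add: prod_zero_iff)
  hence nzH: "pH \<noteq> 0" and nzM: "pM \<noteq> 0" by auto
  have cMla: "count Mla x = Polynomial.order x pH + Polynomial.order x pM" for x
    unfolding Mla_def N_def mset_order lam(2)[symmetric] cA by (rule order_mult[OF nzA])
  have cMth: "count Mth x = (if x = 0 then DH else 0) + Polynomial.order x pM" for x
  proof -
    have nz: "[:0,1::real:]^DH * pM \<noteq> 0" using nzM by simp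
    have "count Mth x = Polynomial.order x ([:0,1:]^DH * pM)"
      unfolding Mth_def N_def mset_order theta(2)[symmetric] cB[unfolded wL_def] ..
    also have "\<dots> = Polynomial.order x ([:0,1:]^DH) + Polynomial.order x pM" by (rule order_mult[OF nz])
    also have "Polynomial.order x ([:0,1::real:]^DH) = (if x = 0 then DH else 0)"
      using order_linear_power[of x 0 DH] by auto
    finally show ?thesis .
  qed
  define RM where "RM = Mth - replicate_mset DH 0"
  define RH where "RH = Mla - RM"
  have cRM: "count RM x = Polynomial.order x pM" for x unfolding RM_def using cMth by simp
  have cRH: "count RH x = Polynomial.order x pH" for x unfolding RH_def using cMla cRM by simp
  have e1: "Mla = RH + RM" by (rule multiset_eqI) (simp add: cMla cRM cRH)
  have e2: "Mth = replicate_mset DH 0 + RM" by (rule multiset_eqI) (simp add: cMth cRM)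
  have sMla: "size Mla = N" and sMth: "size Mth = N" unfolding Mla_def Mth_def by simp_all
  have sRH: "size RH = DH" using sMla sMth e1 e2 by simp
  have bnd: "\<forall>x\<in>#RH + RM. 0 \<le> x \<and> x \<le> real (card V)"
  proof
    fix x assume "x \<in># RH + RM"
    hence "count Mla x > 0" unfolding e1 by simp
    hence "Polynomial.order x (char_poly (up_lap_mat K (\<lambda>F. 1) n)) \<noteq> 0" unfolding cA cMla by (simp add: order_mult[OF nzA])
    hence "poly (char_poly (up_lap_mat K (\<lambda>F. 1) n)) x = 0" by (simp add: order_root)
    thus "0 \<le> x \<and> x \<le> real (card V)" by (rule eig_bound[OF KV V])
  qed
  show ?thesis
    apply (rule exI[of _ RH], rule exI[of _ RM])
    using e1 e2 sRH zH bnd cRH[of 0] DW unfolding Mla_def Mth_def N_def DH_def by simp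
qed


theorem theorem2p10:
  fixes V :: "'a::linorder set" and K H :: "'a set set" and n :: nat
    and lam theta :: "nat \<Rightarrow> real"
  assumes K: "complex_on V K" "complex_dim K (n+1)"
    and H: "is_complex H" "H \<subseteq> K" "complex_dim H (n+1)"
    and L: "is_complex {F \<in> K. (\<lambda>F. (1::real) - (if F \<in> H then 1 else 0)) F > 0}"
    and lam: "\<forall>i j. 1 \<le> i \<longrightarrow> i \<le> j \<longrightarrow> j \<le> card (faces n K) \<longrightarrow> lam i \<le> lam j"
      "char_poly (up_lap_mat K (\<lambda>F. 1) n) = (\<Prod>k=1..card (faces n K). [:- lam k, 1:])"
    and theta: "\<forall>i j. 1 \<le> i \<longrightarrow> i \<le> j \<longrightarrow> j \<le> card (faces n K) \<longrightarrow> theta i \<le> theta j"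
      "char_poly (up_lap_mat K (\<lambda>F. (1::real) - (if F \<in> H then 1 else 0)) n)
         = (\<Prod>k=1..card (faces n K). [:- theta k, 1:])"
  shows "let N = card (faces n K);
             DW = card (faces (n+1) H) - cohom_dim_succ H n;
             DH = card (faces n H);
             lam' = (\<lambda>j::int. if j \<le> 0 then 0
                              else if j > int N then real (card V) else lam (nat j))
         in \<forall>k\<in>{1..N}. lam' (int k - int DW) \<le> theta k \<and> theta k \<le> lam' (int k + int DH)"
proof -
  obtain RH RM where R: "image_mset lam (mset_set {1..card (faces n K)}) = RH + RM"
     "image_mset theta (mset_set {1..card (faces n K)}) = replicate_mset (card (faces n H)) 0 + RM"
     "size RH = card (faces n H)"
     "count RH 0 \<ge> card (faces n H) - (card (faces (n+1) H) - cohom_dim_succ H n)"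
     "\<forall>x\<in>#RH + RM. 0 \<le> x \<and> x \<le> real (card V)"
    using main_part[OF K(1) H L lam theta] by blast
  show ?thesis unfolding Let_def
  proof
    fix k assume k: "k \<in> {1..card (faces n K)}"
    from interlace_abstract[OF lam(1) theta(1) R k]
    show "(if int k - int (card (faces (n+1) H) - cohom_dim_succ H n) \<le> 0 then 0
          else if int k - int (card (faces (n+1) H) - cohom_dim_succ H n) > int (card (faces n K)) then real (card V)
          else lam (nat (int k - int (card (faces (n+1) H) - cohom_dim_succ H n)))) \<le> theta k \<and>
        theta k \<le> (if int k + int (card (faces n H)) \<le> 0 then 0
          else if int k + int (card (faces n H)) > int (card (faces n K)) then real (card V)
          else lam (nat (int k + int (card (faces n H)))))" .
  qed
qed

end
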